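(* Assume the standing hypotheses (H), and let $d=\sup\{\sqrt{x_1^2+x_2^2}:\ \mathbf{x}\in\operatorname{Supp}\rho\}$. Then $\lambda\le-\frac12\Omega^2d^2$.
   Context: Standing hypotheses (H): $K\subset\mathbb{R}^3$ is a bounded axisymmetric domain (invariant under rotations about the $x_3$-axis) satisfying the no-trapping condition (whenever $(x,y,z)\notin K$, the half line $(x,y,z)+t(x,y,0)$, $t\ge0$, lies in $\mathbb{R}^3\setminus K$). $f:[0,\infty)\to[0,\infty)$ satisfies (F1) non-negative, continuous, strictly increasing for $s>0$; (F2) $\lim_{s\to0}f(s)s^{-4/3}=0$, $\lim_{s\to\infty}f(s)s^{-4/3}=\infty$; (F3) $\liminf_{s\to\infty}f(s)s^{-\gamma}>0$ for some $\gamma>4/3$; (F4) $f\in C^1(0,\infty)$ and $\liminf_{s\to0}f'(s)s^{-\mu}>0$ for some $\mu>0$. $A(s)=s\int_0^s\frac{f(t)}{t^2}dt$. For $q>3$, $\rho_K\in L^q(K)$ is non-negative and axisymmetric and $\Phi_K(\mathbf{x})=\int_K\frac{\rho_K(\mathbf{y})}{|\mathbf{x}-\mathbf{y}|}d\mathbf{y}$. $M>0$; $\Omega\ge1$ is a constant. For $\rho$ on $\mathbb{R}^3\setminus K$, $B\rho(\mathbf{x})=\int_{\mathbb{R}^3\setminus K}\frac{\rho(\mathbf{y})}{|\mathbf{x}-\mathbf{y}|}d\mathbf{y}$. $\rho:\mathbb{R}^3\setminus K\to[0,\infty)$ is bounded and continuous with $\int\rho=M$, and there is a constant $\lambda$ such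 that $A'(\rho)-B\rho-\frac12\Omega^2r^2-\Phi_K=\lambda$ on $\{\rho>0\}$, where $r=\sqrt{x_1^2+x_2^2}$. *)

theory Defs
  imports "HOL-Analysis.Analysis"
begin

definition cyl_r :: "real^3 \<Rightarrow> real" where
  "cyl_r x = sqrt ((x$1)^2 + (x$2)^2)"

definition rot3 :: "real \<Rightarrow> real^3 \<Rightarrow> real^3" where
  "rot3 \<theta> x = vector [cos \<theta> * x$1 - sin \<theta> * x$2, sin \<theta> * x$1 + cos \<theta> * x$2, x$3]"

definition axisym_set :: "(real^3) set \<Rightarrow> bool" where
  "axisym_set K \<longleftrightarrow> (\<forall>\<theta> x. rot3 \<theta> x \<in> K \<longleftrightarrow> x \<in> K)"

definition axisym_fun_on :: "(real^3) set \<Rightarrow> (real^3 \<Rightarrow> real) \<Rightarrow> bool" where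
  "axisym_fun_on S g \<longleftrightarrow> (\<forall>\<theta>. \<forall>x\<in>S. g (rot3 \<theta> x) = g x)"

definition bounded_domain :: "(real^3) set \<Rightarrow> bool" where
  "bounded_domain K \<longleftrightarrow> K \<noteq> {} \<and> open K \<and> connected K \<and> bounded K"

definition no_trapping :: "(real^3) set \<Rightarrow> bool" where
  "no_trapping K \<longleftrightarrow>
     (\<forall>x. x \<notin> K \<longrightarrow> (\<forall>t\<ge>0. x + t *\<^sub>R vector [x$1, x$2, 0] \<notin> K))"

definition F1 :: "(real \<Rightarrow> real) \<Rightarrow> bool" where
  "F1 f \<longleftrightarrow> (\<forall>s\<ge>0. f s \<ge> 0) \<and> continuous_on {0..} f \<and> strict_mono_on {0<..} f"

definition F2 :: "(real \<Rightarrow> real) \<Rightarrow> bool" where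
  "F2 f \<longleftrightarrow> ((\<lambda>s. f s / s powr (4/3)) \<longlongrightarrow> 0) (at_right 0)
            \<and> filterlim (\<lambda>s. f s / s powr (4/3)) at_top at_top"

definition F3 :: "(real \<Rightarrow> real) \<Rightarrow> bool" where
  "F3 f \<longleftrightarrow> (\<exists>\<gamma>>4/3. Liminf at_top (\<lambda>s. ereal (f s / s powr \<gamma>)) > 0)"

definition F4 :: "(real \<Rightarrow> real) \<Rightarrow> bool" where
  "F4 f \<longleftrightarrow> f differentiable_on {0<..} \<and> continuous_on {0<..} (deriv f)
            \<and> (\<exists>\<mu>>0. Liminf (at_right 0) (\<lambda>s. ereal (deriv f s / s powr \<mu>)) > 0)"

definition A_fun :: "(real \<Rightarrow> real) \<Rightarrow> real \<Rightarrow> real" where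
  "A_fun f s = s * (LBINT t=0..s. f t / t^2)"

definition newton_pot :: "(real^3) set \<Rightarrow> (real^3 \<Rightarrow> real) \<Rightarrow> real^3 \<Rightarrow> real" where
  "newton_pot S g x = (LINT y|lebesgue_on S. g y / dist x y)"

definition in_Lq :: "real \<Rightarrow> (real^3) set \<Rightarrow> (real^3 \<Rightarrow> real) \<Rightarrow> bool" where
  "in_Lq q S g \<longleftrightarrow> g \<in> borel_measurable (lebesgue_on S)
                     \<and> integrable (lebesgue_on S) (\<lambda>x. \<bar>g x\<bar> powr q)"

end

theory Submission imports Defs "HOL-Real_Asymp.Real_Asymp" begin

lemma g_cont:
  assumes "F1 f" "0 < a"
  shows "continuous_on {a..b} (\<lambda>t. f t / t^2)"
proof -
  have "continuous_on {a..b} f"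
    using assms by (auto simp: F1_def intro: continuous_on_subset)
  then show ?thesis using assms by (intro continuous_intros) auto
qed

lemma g_int_Icc:
  assumes "F1 f" "0 < a"
  shows "set_integrable lborel {a..b} (\<lambda>t. f t / t^2)"
  by (rule borel_integrable_atLeastAtMost'[OF g_cont[OF assms]])

lemma g_int_all:
  assumes "F1 f" "set_integrable lborel {0<..<1} (\<lambda>t. f t / t^2)" "0 < u"
  shows "set_integrable lborel {0<..<u} (\<lambda>t. f t / t^2)"
proof (cases "u \<le> 1")
  case True
  then show ?thesis by (intro set_integrable_subset[OF assms(2)]) auto
next
  case False
  have "set_integrable lborel ({0<..<1} \<union> {1..u}) (\<lambda>t. f t / t^2)"
    by (intro set_integrable_Un assms(2) g_int_Icc[OF assms(1)]) auto
  then show ?thesis by (rule set_integrable_subset) auto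
qed

lemma g_nint_all:
  assumes "F1 f" "\<not> set_integrable lborel {0<..<1} (\<lambda>t. f t / t^2)" "0 < u"
  shows "\<not> set_integrable lborel {0<..<u} (\<lambda>t. f t / t^2)"
proof
  assume i: "set_integrable lborel {0<..<u} (\<lambda>t. f t / t^2)"
  show False
  proof (cases "u \<le> 1")
    case False
    then have "{0<..<1} \<subseteq> {0<..<u}" by auto
    then show ?thesis using assms(2) set_integrable_subset[OF i, of "{0<..<1}"] by auto
  next
    case True
    have "set_integrable lborel ({0<..<u} \<union> {u..1}) (\<lambda>t. f t / t^2)"
      by (intro set_integrable_Un i g_int_Icc[OF assms(1)]) (use assms in auto)
    then have "set_integrable lborel {0<..<1} (\<lambda>t. f t / t^2)" by (rule set_integrable_subset) auto
    with assms show False by auto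
  qed
qed

lemma G_deriv:
  assumes f1: "F1 f" and int: "set_integrable lborel {0<..<1} (\<lambda>t. f t / t^2)" and s: "0 < s"
  shows "(A_fun f has_real_derivative ((LBINT t=0..s. f t / t^2) + f s / s)) (at s)"
proof -
  define g where "g = (\<lambda>t. f t / t^2)"
  define c where "c = s/2"
  have c: "0 < c" "c < s" using s by (auto simp: c_def)
  have ii: "interval_lebesgue_integrable lborel 0 (ereal u) g" if "0 < u" for u :: real
    using g_int_all[OF f1 int that] that unfolding g_def
    by (simp add: interval_lebesgue_integrable_def zero_ereal_def)
  have split: "(LBINT t=0..u. g t) = (LBINT t=0..c. g t) + (LBINT t=c..u. g t)" if "0 < u" for u :: real
  proof -
    have "interval_lebesgue_integrable lborel (min 0 (min (ereal c) (ereal u))) (max 0 (max (ereal c) (ereal u))) g"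
      using ii[of "max c u"] c that by (cases "c \<le> u") (simp_all add: zero_ereal_def max_def min_def)
    from interval_integral_sum[OF this] show ?thesis by simp
  qed
  have "((\<lambda>u. LBINT t=c..u. g t) has_vector_derivative g s) (at s within {c .. 2 * s})"
    by (rule interval_integral_FTC2) (use c s g_cont[OF f1 c(1), of "2 * s"] in \<open>auto simp: g_def\<close>)
  then have "((\<lambda>u. LBINT t=c..u. g t) has_vector_derivative g s) (at s within {c <..< 2 * s})"
    by (rule has_vector_derivative_within_subset) auto
  then have F: "((\<lambda>u. LBINT t=c..u. g t) has_real_derivative g s) (at s)"
    using c s by (simp add: has_real_derivative_iff_has_vector_derivative at_within_open[of s "{c <..< 2 * s}"])
  have "((\<lambda>u. u * ((LBINT t=0..c. g t) + (LBINT t=c..u. g t))) has_real_derivative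
          1 * ((LBINT t=0..c. g t) + (LBINT t=c..s. g t)) + (0 + g s) * s) (at s)"
    by (intro DERIV_mult DERIV_add DERIV_ident DERIV_const F)
  then have "(A_fun f has_real_derivative
          1 * ((LBINT t=0..c. g t) + (LBINT t=c..s. g t)) + (0 + g s) * s) (at s)"
    by (rule has_field_derivative_transform_within_open[where S="{0<..}"])
       (use s split in \<open>auto simp: A_fun_def g_def\<close>)
  moreover have "1 * ((LBINT t=0..c. g t) + (LBINT t=c..s. g t)) + (0 + g s) * s = (LBINT t=0..s. f t / t^2) + f s / s"
    using split[OF s] s by (simp add: g_def power2_eq_square)
  ultimately show ?thesis by simp
qed

lemma G_lim:
  assumes f1: "F1 f" and int: "set_integrable lborel {0<..<1} (\<lambda>t. f t / t^2)"
  shows "((\<lambda>s::real. LBINT t=0..s. f t / t^2) \<longlongrightarrow> 0) (at_right 0)"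
proof -
  define g where "g = (\<lambda>t. f t / t^2)"
  have i2: "set_integrable lborel {0<..<2} g" using g_int_all[OF f1 int, of 2] by (simp add: g_def)
  have i1: "set_integrable lborel {0<..1} g" by (rule set_integrable_subset[OF i2]) auto
  have lim: "((\<lambda>a. LBINT t:{a..1}. g t) \<longlongrightarrow> (LBINT t:{0<..1}. g t)) (at_right 0)"
    by (rule tendsto_set_lebesgue_integral_at_right[OF _ _ i1]) auto
  have "((\<lambda>a. (LBINT t:{0<..1}. g t) - (LBINT t:{a..1}. g t)) \<longlongrightarrow> (LBINT t:{0<..1}. g t) - (LBINT t:{0<..1}. g t)) (at_right 0)"
    by (intro tendsto_intros lim)
  then have lim2: "((\<lambda>a. (LBINT t:{0<..1}. g t) - (LBINT t:{a..1}. g t)) \<longlongrightarrow> 0) (at_right 0)" by simp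
  have ev: "\<forall>\<^sub>F a in at_right 0. (LBINT t:{0<..1}. g t) - (LBINT t:{a..1}. g t) = (LBINT t=0..a. g t)"
  proof -
  have "\<forall>\<^sub>F a in at_right (0::real). a \<in> {0<..<1}" by (rule eventually_at_right_real) simp
  then show ?thesis
  proof eventually_elim
    case (elim a)
    then have a: "0 < a" "a < 1" by auto
    have ii: "interval_lebesgue_integrable lborel (min 0 (min (ereal a) 1)) (max 0 (max (ereal a) 1)) g"
      using set_integrable_subset[OF i1, of "{0<..<1}"] a unfolding interval_lebesgue_integrable_def
      by (simp add: zero_ereal_def one_ereal_def max_def min_def subset_eq)
    have "(LBINT t=0..a. g t) + (LBINT t=a..1. g t) = (LBINT t=0..1. g t)"
      by (rule interval_integral_sum[OF ii])
    moreover have "(LBINT t=a..1. g t) = (LBINT t:{a..1}. g t)"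
      using interval_integral_Icc[of a 1 g] a by (simp add: one_ereal_def)
    moreover have "(LBINT t=0..1. g t) = (LBINT t:{0<..1}. g t)"
      using interval_integral_Ioc[of 0 1 g] by (simp add: one_ereal_def zero_ereal_def)
    ultimately show ?case by simp
  qed
  qed
  from tendsto_cong[OF ev] lim2 show ?thesis by (simp add: g_def)
qed

lemma f_lim:
  assumes f2: "F2 f"
  shows "((\<lambda>s. f s / s) \<longlongrightarrow> 0) (at_right 0)"
proof -
  have l1: "((\<lambda>s. f s / s powr (4/3)) \<longlongrightarrow> 0) (at_right 0)" using f2 by (simp add: F2_def)
  have l2: "((\<lambda>s::real. s powr (1/3)) \<longlongrightarrow> 0) (at_right 0)" by real_asymp
  have "((\<lambda>s. f s / s powr (4/3) * s powr (1/3)) \<longlongrightarrow> 0 * 0) (at_right 0)"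
    by (rule tendsto_mult[OF l1 l2])
  moreover have "\<forall>\<^sub>F s in at_right 0. f s / s powr (4/3) * s powr (1/3) = f s / s"
    using eventually_at_right_less[of "0::real"]
  proof eventually_elim
    case (elim s)
    have "s powr (4/3) = s powr (1 + 1/3)" by simp
    also have "\<dots> = s powr 1 * s powr (1/3)" by (rule powr_add)
    also have "\<dots> = s * s powr (1/3)" using elim by simp
    finally show ?case using elim by simp
  qed
  ultimately show ?thesis using tendsto_cong by fastforce
qed

lemma A_props:
  assumes f1: "F1 f" and f2: "F2 f"
  shows "\<exists>h. (\<forall>s>0. deriv (A_fun f) s = h s) \<and> (\<forall>\<epsilon>>0. \<exists>\<delta>>0. \<forall>s. 0 < s \<and> s < \<delta> \<longrightarrow> h s < \<epsilon>)
     \<and> (\<forall>C>0. \<exists>H. \<forall>s. 0 < s \<and> s \<le> C \<longrightarrow> h s \<le> H)"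
proof (cases "set_integrable lborel {0<..<1} (\<lambda>t. f t / t^2)")
  case True
  define G where "G s = (LBINT t=0..ereal s. f t / t^2)" for s :: real
  define h where "h s = G s + f s / s" for s :: real
  have d: "\<forall>s>0. deriv (A_fun f) s = h s"
    using G_deriv[OF f1 True] by (auto intro!: DERIV_imp_deriv simp: h_def G_def)
  have hl: "(h \<longlongrightarrow> 0) (at_right 0)"
    unfolding h_def G_def using tendsto_add[OF G_lim[OF f1 True] f_lim[OF f2]] by simp
  have e: "\<forall>\<epsilon>>0. \<exists>\<delta>>0. \<forall>s. 0 < s \<and> s < \<delta> \<longrightarrow> h s < \<epsilon>"
  proof (intro allI impI)
    fix \<epsilon> :: real assume "\<epsilon> > 0"
    from order_tendstoD(2)[OF hl this] obtain b where "b > 0" "\<forall>y>0. y < b \<longrightarrow> h y < \<epsilon>"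
      unfolding eventually_at_right_field by auto
    then show "\<exists>\<delta>>0. \<forall>s. 0 < s \<and> s < \<delta> \<longrightarrow> h s < \<epsilon>" by auto
  qed
  have gnn: "0 \<le> f t / t^2" if "0 \<le> t" for t using f1 that by (auto simp: F1_def)
  have b: "\<forall>C>0. \<exists>H. \<forall>s. 0 < s \<and> s \<le> C \<longrightarrow> h s \<le> H"
  proof (intro allI impI)
    fix C :: real assume C: "C > 0"
    from order_tendstoD(2)[OF f_lim[OF f2], of 1] obtain \<delta> where \<delta>: "\<delta> > 0" "\<forall>y>0. y < \<delta> \<longrightarrow> f y / y < 1"
      unfolding eventually_at_right_field by auto
    show "\<exists>H. \<forall>s. 0 < s \<and> s \<le> C \<longrightarrow> h s \<le> H"
    proof (intro exI allI impI)
      fix s assume s: "0 < s \<and> s \<le> C"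
      have ii: "interval_lebesgue_integrable lborel (min 0 (min (ereal s) (ereal C))) (max 0 (max (ereal s) (ereal C))) (\<lambda>t. f t / t^2)"
        using g_int_all[OF f1 True, of C] s C unfolding interval_lebesgue_integrable_def
        by (simp add: zero_ereal_def max_def min_def)
      have "G s + (LBINT t=s..C. f t / t^2) = G C"
        unfolding G_def by (rule interval_integral_sum[OF ii])
      moreover have "(LBINT t=s..C. f t / t^2) = (LBINT t:{s..C}. f t / t^2)"
        using interval_integral_Icc[of s C] s by simp
      moreover have "(LBINT t:{s..C}. f t / t^2) \<ge> 0"
        unfolding set_lebesgue_integral_def
        using s by (intro Bochner_Integration.integral_nonneg_AE AE_I2) (auto simp: indicator_def gnn)
      ultimately have GC: "G s \<le> G C" by linarith
      have fC: "f s / s \<le> max 1 (f C / \<delta>)"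
      proof (cases "s < \<delta>")
        case True
        with \<delta> s have "f s / s < 1" by blast
        then show ?thesis by linarith
      next
        case False
        have "f s \<le> f C"
        proof (cases "s = C")
          case False with s f1 show ?thesis unfolding F1_def strict_mono_on_def
            by (metis greaterThan_iff less_eq_real_def order_less_le_trans)
        qed simp
        moreover have "f C \<ge> 0" using f1 C by (auto simp: F1_def)
        ultimately have "f s / s \<le> f C / s" using s by (simp add: divide_right_mono)
        also have "\<dots> \<le> f C / \<delta>" using False \<delta> \<open>f C \<ge> 0\<close> by (simp add: divide_left_mono)
        finally show ?thesis by simp
      qed
      show "h s \<le> G C + max 1 (f C / \<delta>)" unfolding h_def using GC fC by simp
    qed
  qed
  from d e b show ?thesis by blast
next
  case False
  have z: "A_fun f u = 0" if "0 < u" for u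
  proof -
    have "\<not> set_integrable lborel {0<..<u} (\<lambda>t. f t / t^2)" by (rule g_nint_all[OF f1 False that])
    then have "(LBINT t=0..ereal u. f t / t^2) = 0"
      using that unfolding interval_lebesgue_integral_def set_lebesgue_integral_def set_integrable_def
      by (simp add: zero_ereal_def not_integrable_integral_eq)
    then show ?thesis by (simp add: A_fun_def)
  qed
  have "\<forall>s>0. deriv (A_fun f) s = 0"
  proof (intro allI impI)
    fix s :: real assume s: "0 < s"
    have "(A_fun f has_real_derivative 0) (at s)"
      by (rule has_field_derivative_transform_within_open[OF DERIV_const, where S="{0<..}"])
         (use s z in auto)
    then show "deriv (A_fun f) s = 0" by (rule DERIV_imp_deriv)
  qed
  then show ?thesis by (intro exI[of _ "\<lambda>_. 0"]) auto
qed


lemma newton_pot_nonneg: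
  assumes "\<forall>y\<in>S. g y \<ge> 0"
  shows "newton_pot S g x \<ge> 0"
  unfolding newton_pot_def
  using assms by (intro Bochner_Integration.integral_nonneg_AE AE_I2) (auto simp: space_restrict_space)

lemma cyl_r_ray:
  assumes "t \<ge> 0"
  shows "cyl_r (x + t *\<^sub>R vector [x$1, x$2, 0]) = (1+t) * cyl_r x"
proof -
  have "cyl_r (x + t *\<^sub>R vector [x$1, x$2, 0]) = sqrt ((1+t)^2 * ((x$1)^2 + (x$2)^2))"
    unfolding cyl_r_def by (simp add: algebra_simps power2_eq_square)
  also have "\<dots> = (1+t) * cyl_r x" using assms
    by (simp add: real_sqrt_mult cyl_r_def)
  finally show ?thesis .
qed

theorem mainTheorem12:
  fixes K :: "(real^3) set" and f :: "real \<Rightarrow> real"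
    and q M \<Omega> lam :: real and \<rho>K \<rho> :: "real^3 \<Rightarrow> real"
  assumes K_dom: "bounded_domain K" and K_axi: "axisym_set K" and K_nt: "no_trapping K"
    and f1: "F1 f" and f2: "F2 f" and f3: "F3 f" and f4: "F4 f"
    and q: "q > 3" and rhoK_Lq: "in_Lq q K \<rho>K"
    and rhoK_nonneg: "\<forall>x\<in>K. \<rho>K x \<ge> 0" and rhoK_axi: "axisym_fun_on K \<rho>K"
    and M: "M > 0" and Omega: "\<Omega> \<ge> 1"
    and rho_nonneg: "\<forall>x. x \<notin> K \<longrightarrow> \<rho> x \<ge> 0"
    and rho_bdd: "bounded (\<rho> ` (- K))"
    and rho_cont: "continuous_on (- K) \<rho>"
    and rho_int: "integrable (lebesgue_on (- K)) \<rho>"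
    and rho_mass: "(LINT x|lebesgue_on (- K). \<rho> x) = M"
    and EL: "\<forall>x. x \<notin> K \<and> \<rho> x > 0 \<longrightarrow>
               deriv (A_fun f) (\<rho> x) - newton_pot (- K) \<rho> x
                 - 1/2 * \<Omega>^2 * (cyl_r x)^2 - newton_pot K \<rho>K x = lam"
  shows "ereal lam \<le>
           - ereal (1/2 * \<Omega>^2) *
             (SUP x\<in>closure {y. y \<notin> K \<and> \<rho> y > 0}. ereal (cyl_r x))^2"
proof -
  define a where "a = 1/2 * \<Omega>^2"
  have a: "a > 0" using Omega by (simp add: a_def)
  obtain h where hd: "\<forall>s>0. deriv (A_fun f) s = h s"
    and he: "\<forall>\<epsilon>>0. \<exists>\<delta>>0. \<forall>s. 0 < s \<and> s < \<delta> \<longrightarrow> h s < \<epsilon>"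
    and hb: "\<forall>C>0. \<exists>H. \<forall>s. 0 < s \<and> s \<le> C \<longrightarrow> h s \<le> H"
    using A_props[OF f1 f2] by blast
  have P1: "lam \<le> h (\<rho> x) - a * (cyl_r x)^2" if "x \<notin> K" "\<rho> x > 0" for x
  proof -
    have "newton_pot (- K) \<rho> x \<ge> 0" by (rule newton_pot_nonneg) (use rho_nonneg in auto)
    moreover have "newton_pot K \<rho>K x \<ge> 0" by (rule newton_pot_nonneg) (use rhoK_nonneg in auto)
    moreover have "deriv (A_fun f) (\<rho> x) = h (\<rho> x)" using hd that by auto
    ultimately show ?thesis using EL that unfolding a_def by force
  qed
  obtain B where B: "\<forall>x\<in>- K. \<bar>\<rho> x\<bar> \<le> B" using rho_bdd unfolding bounded_real by auto
  define C where "C = max B 1"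
  obtain H where H: "\<forall>s. 0 < s \<and> s \<le> C \<longrightarrow> h s \<le> H" using hb unfolding C_def by force
  have rhoC: "\<rho> x \<le> C" if "x \<notin> K" for x using B that unfolding C_def by force
  have P2: "lam \<le> - a * (cyl_r x)^2" if xS: "x \<notin> K" "\<rho> x > 0" and rx: "cyl_r x > 0" for x
  proof (rule ccontr)
    assume "\<not> lam \<le> - a * (cyl_r x)^2"
    then have eps: "lam + a * (cyl_r x)^2 > 0" by simp
    obtain \<delta> where \<delta>: "\<delta> > 0" "\<forall>s. 0 < s \<and> s < \<delta> \<longrightarrow> h s < lam + a * (cyl_r x)^2"
      using he eps by blast
    define y where "y t = x + t *\<^sub>R vector [x$1, x$2, 0]" for t :: real
    have yK: "y t \<notin> K" if "t \<ge> 0" for t using K_nt xS that unfolding no_trapping_def y_def by blast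
    have ry: "cyl_r (y t) = (1+t) * cyl_r x" if "t \<ge> 0" for t using cyl_r_ray[OF that] by (simp add: y_def)
    have key: "lam \<le> h (\<rho> (y t)) - a * (1+t)^2 * (cyl_r x)^2" if "t \<ge> 0" "\<rho> (y t) > 0" for t
      using P1[OF yK[OF that(1)] that(2)] ry[OF that(1)] by (simp add: power_mult_distrib mult.assoc)
    have big: "\<rho> (y t) \<ge> \<delta>" if "t \<ge> 0" "\<rho> (y t) > 0" for t
    proof (rule ccontr)
      assume "\<not> \<rho> (y t) \<ge> \<delta>"
      then have "h (\<rho> (y t)) < lam + a * (cyl_r x)^2" using \<delta> that by auto
      moreover have "(1+t)^2 \<ge> 1" using that by simp
      then have "a * (1+t)^2 * (cyl_r x)^2 \<ge> a * (cyl_r x)^2"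
        using a by (simp add: mult_left_mono mult_right_mono)
      ultimately show False using key[OF that] by linarith
    qed
    have y0: "y 0 = x" by (simp add: y_def)
    have pos: "\<rho> (y t) > 0" if t: "t \<ge> 0" for t
    proof (rule ccontr)
      assume "\<not> \<rho> (y t) > 0"
      then have "\<rho> (y t) \<le> \<delta>/2" using \<delta> by simp
      moreover have "\<delta>/2 \<le> \<rho> (y 0)" using big[of 0] xS y0 \<delta> by simp
      moreover have "continuous_on {0..t} (\<lambda>s. \<rho> (y s))"
        by (rule continuous_on_compose2[OF rho_cont, of "{0..t}" y])
           (use yK[unfolded y_def] in \<open>auto simp: y_def intro!: continuous_intros\<close>)
      ultimately obtain s where s: "0 \<le> s" "s \<le> t" "\<rho> (y s) = \<delta>/2"
        using IVT2'[of "\<lambda>s. \<rho> (y s)" t "\<delta>/2" 0] t by auto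
      then show False using big[of s] \<delta> by auto
    qed
    define q where "q = a * (cyl_r x)^2"
    have q: "q > 0" using a rx by (simp add: q_def)
    define t where "t = max 0 ((H - lam) / q)"
    have t: "t \<ge> 0" by (simp add: t_def)
    have "q * t \<ge> H - lam" using q unfolding t_def
      by (cases "(H - lam) / q \<le> 0") (auto simp: field_simps)
    moreover have "(1+t)^2 > t" proof -
      have "(1+t)^2 = 1 + 2*t + t*t" by (simp add: power2_eq_square algebra_simps)
      moreover have "t*t \<ge> 0" using t by simp
      ultimately show ?thesis using t by linarith
    qed
    then have "q * (1+t)^2 > q * t" using q by simp
    moreover have "h (\<rho> (y t)) \<le> H" using H pos[OF t] rhoC[OF yK[OF t]] by auto
    moreover have "lam \<le> h (\<rho> (y t)) - q * (1+t)^2" using key[OF t pos[OF t]] by (simp add: q_def mult_ac)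
    ultimately show False by linarith
  qed
  have P3: "\<exists>x0. x0 \<notin> K \<and> \<rho> x0 > 0 \<and> cyl_r x0 > 0"
  proof (rule ccontr)
    assume nex: "\<not> ?thesis"
    have ax: "x$1 = 0" if "x \<notin> K" "\<rho> x > 0" for x
    proof -
      have "cyl_r x \<le> 0" using nex that by auto
      then have "(x$1)^2 + (x$2)^2 = 0" unfolding cyl_r_def
        by (metis add_nonneg_nonneg order_antisym real_sqrt_eq_zero_cancel_iff real_sqrt_ge_zero zero_le_power2)
      then show ?thesis by (simp add: add_nonneg_eq_0_iff)
    qed
    have N: "{x::real^3. x$1 = 0} \<in> null_sets lebesgue"
      using negligible_standard_hyperplane_cart[of 1] negligible_iff_null_sets by blast
    have AEl: "AE x in lebesgue. x \<notin> {x::real^3. x$1 = 0}" by (rule AE_not_in[OF N])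
    have cK: "closed (- K)" using K_dom by (auto simp: bounded_domain_def)
    then have mK: "- K \<inter> space lebesgue \<in> sets lebesgue" by simp
    have "AE x in lebesgue_on (- K). \<rho> x = 0"
      unfolding AE_restrict_space_iff[OF mK]
      using AEl
    proof eventually_elim
      case (elim x)
      show ?case using ax[of x] rho_nonneg elim by force
    qed
    then have "(LINT x|lebesgue_on (- K). \<rho> x) = 0" by (rule integral_eq_zero_AE)
    with rho_mass M show False by simp
  qed
  then obtain x0 where x0: "x0 \<notin> K" "\<rho> x0 > 0" "cyl_r x0 > 0" by blast
  have lam0: "lam < 0"
  proof -
    have "lam \<le> - a * (cyl_r x0)^2" using P2[OF x0] .
    moreover have "a * (cyl_r x0)^2 > 0" using a x0 by simp
    ultimately show ?thesis by linarith
  qed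
  define S where "S = {y. y \<notin> K \<and> \<rho> y > 0}"
  have cr: "cyl_r x \<ge> 0" for x by (simp add: cyl_r_def)
  have PS: "S \<subseteq> {x. lam \<le> - a * (cyl_r x)^2}"
  proof
    fix x assume "x \<in> S"
    then have xS: "x \<notin> K" "\<rho> x > 0" by (auto simp: S_def)
    show "x \<in> {x. lam \<le> - a * (cyl_r x)^2}"
    proof (cases "cyl_r x > 0")
      case True then show ?thesis using P2[OF xS] by simp
    next
      case False then have "cyl_r x = 0" using cr[of x] by simp
      then show ?thesis using lam0 by simp
    qed
  qed
  have cl: "closed {x. lam \<le> - a * (cyl_r x)^2}"
    unfolding cyl_r_def by (intro closed_Collect_le continuous_intros)
  have P4: "\<forall>x\<in>closure S. lam \<le> - a * (cyl_r x)^2"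
    using closure_minimal[OF PS cl] by blast
  define R where "R = sqrt (- lam / a)"
  have rR: "cyl_r x \<le> R" if "x \<in> closure S" for x
  proof -
    have "(cyl_r x)^2 \<le> - lam / a" proof -
      have "lam \<le> - a * (cyl_r x)^2" using P4 that by blast
      then have "a * (cyl_r x)^2 \<le> - lam" by linarith
      then show ?thesis using a by (simp add: field_simps)
    qed
    then show ?thesis unfolding R_def using cr[of x] by (simp add: real_le_rsqrt)
  qed
  have x0S: "x0 \<in> closure S" using x0 closure_subset[of S] by (auto simp: S_def)
  define D where "D = (SUP x\<in>closure S. ereal (cyl_r x))"
  have Dle: "D \<le> ereal R" unfolding D_def using rR by (intro SUP_least) simp
  have Dge: "ereal 0 \<le> D" unfolding D_def using cr[of x0] SUP_upper[OF x0S, of "\<lambda>x. ereal (cyl_r x)"]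
    by (metis ereal_less_eq(3) order_trans)
  obtain d where d: "D = ereal d" using Dle Dge by (cases D) auto
  have d0: "0 \<le> d" "d \<le> R" using Dle Dge d by auto
  have "d^2 \<le> R^2" using d0 by (simp add: power_mono)
  also have "R^2 = - lam / a" unfolding R_def using lam0 a by (simp add: divide_nonpos_pos)
  finally have "lam \<le> - a * d^2" using a by (simp add: field_simps)
  then have "ereal lam \<le> - ereal a * (ereal d)^2" by (simp add: power2_eq_square)
  then show ?thesis unfolding d[symmetric] D_def S_def a_def .
qed
end
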